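(* Let $0\le t_1<t_2$, let $m,k>0$ be constants, let $f\in C[t_1,t_2]$, and let $u_1,v_1\in\mathbb{R}$. For $u\in C^2[t_1,t_2]$ define $$I^t[u]=\frac{m}{2}\,[u',u']_{t_1}^{t_2}+\frac{k}{2}\,[u,u]_{t_1}^{t_2}-[f,u]_{t_1}^{t_2}-m v_1\,u(t_2),$$ and let $\mathcal{D}^t=\{\phi\in C^2[t_1,t_2]:\ \phi(t_1)=u_1\}$. Suppose $u\in\mathcal{D}^t$ is a stationary point of $I^t$ on $\mathcal{D}^t$, i.e. $\frac{d}{d\varepsilon}I^t[u+\varepsilon\eta]\big|_{\varepsilon=0}=0$ for every $\eta\in C^2[t_1,t_2]$ with $\eta(t_1)=0$. Then $u$ solves the initial value problem $$m u''(s)+k u(s)=f(s),\quad s\in(t_1,t_2),\qquad u(t_1)=u_1,\quad u'(t_1)=v_1 .$$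
   Context: For an interval $[t_1,t_2]$ with $t_1\ge0$ and functions $g,h\in L^2(t_1,t_2)$, the convolution over $[t_1,t_2]$ is defined as $$[g,h]_{t_1}^{t_2}=\int_0^{t_2-t_1}g(t_1+s)\,h(t_2-s)\,ds=\int_{t_1}^{t_2}g(s)\,h(t_1+t_2-s)\,ds .$$ (In the paper the last term of $I^t$ is written as $[\tilde f^1,u]_{t_1}^{t_2}$ with $\tilde f^1(s)=m v_1\delta(s-t_1)$, which by convention evaluates to $m v_1 u(t_2)$.) *)

theory Defs
  imports "HOL-Analysis.Analysis"
begin

definition dI :: "real \<Rightarrow> real \<Rightarrow> (real \<Rightarrow> real) \<Rightarrow> real \<Rightarrow> real" where
  "dI t1 t2 u x = vector_derivative u (at x within {t1..t2})"

definition C2 :: "real \<Rightarrow> real \<Rightarrow> (real \<Rightarrow> real) \<Rightarrow> bool" where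
  "C2 t1 t2 u \<longleftrightarrow>
     (\<forall>x\<in>{t1..t2}. (u has_vector_derivative dI t1 t2 u x) (at x within {t1..t2})) \<and>
     (\<forall>x\<in>{t1..t2}. (dI t1 t2 u has_vector_derivative dI t1 t2 (dI t1 t2 u) x) (at x within {t1..t2})) \<and>
     continuous_on {t1..t2} (dI t1 t2 (dI t1 t2 u))"

definition conv :: "real \<Rightarrow> real \<Rightarrow> (real \<Rightarrow> real) \<Rightarrow> (real \<Rightarrow> real) \<Rightarrow> real" where
  "conv t1 t2 g h = integral {t1..t2} (\<lambda>s. g s * h (t1 + t2 - s))"

definition It :: "real \<Rightarrow> real \<Rightarrow> real \<Rightarrow> real \<Rightarrow> (real \<Rightarrow> real) \<Rightarrow> real \<Rightarrow> (real \<Rightarrow> real) \<Rightarrow> real" where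
  "It t1 t2 m k f v1 u =
     m / 2 * conv t1 t2 (dI t1 t2 u) (dI t1 t2 u) + k / 2 * conv t1 t2 u u
     - conv t1 t2 f u - m * v1 * u t2"

end

theory Submission
  imports Defs
begin

lemma dI_eq:
  assumes "t1 < t2" "x \<in> {t1..t2}" "(f has_vector_derivative f') (at x within {t1..t2})"
  shows "dI t1 t2 f x = f'"
  unfolding dI_def using vector_derivative_within_closed_interval[OF assms] .

lemma C2_cont:
  assumes "C2 t1 t2 u"
  shows "continuous_on {t1..t2} u" "continuous_on {t1..t2} (dI t1 t2 u)"
    "continuous_on {t1..t2} (dI t1 t2 (dI t1 t2 u))"
  using assms unfolding C2_def by (auto intro: continuous_on_vector_derivative)

lemma refl_cont:
  fixes h :: "real \<Rightarrow> real"
  assumes "continuous_on {a..b} h"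
  shows "continuous_on {a..b} (\<lambda>s. h (a + b - s))"
proof -
  have c: "continuous_on {a..b} (\<lambda>s::real. a + b - s)" by (intro continuous_intros)
  show ?thesis by (rule continuous_on_compose2[OF assms c]) auto
qed

lemma prod_int:
  fixes g h :: "real \<Rightarrow> real"
  assumes "continuous_on {a..b} g" "continuous_on {a..b} h"
  shows "(\<lambda>s. g s * h (a + b - s)) integrable_on {a..b}"
  by (intro integrable_continuous_real continuous_on_mult assms refl_cont)

lemma refl_deriv:
  fixes F :: "real \<Rightarrow> real"
  assumes "x \<in> {a..b}" "(F has_vector_derivative F') (at (a+b-x) within {a..b})"
  shows "((\<lambda>s. F (a+b-s)) has_vector_derivative -F') (at x within {a..b})"
proof -
  have 1: "((\<lambda>s. a+b-s) has_vector_derivative -1) (at x within {a..b})"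
    by (auto intro!: derivative_eq_intros)
  have 2: "(F has_vector_derivative F') (at ((\<lambda>s. a+b-s) x) within (\<lambda>s. a+b-s) ` {a..b})"
    using assms(2) by (rule has_vector_derivative_within_subset) auto
  show ?thesis using vector_diff_chain_within[OF 1 2] by (simp add: o_def)
qed

lemma refl_integral:
  fixes h :: "real \<Rightarrow> real"
  assumes "continuous_on {a..b} h" "a \<le> b"
  shows "integral {a..b} (\<lambda>s. h (a + b - s)) = integral {a..b} h"
proof -
  define H where "H x = integral {a..x} h" for x
  have "((\<lambda>s. - H (a+b-s)) has_vector_derivative h (a+b-x)) (at x within {a..b})"
    if "x \<in> {a..b}" for x
  proof -
    have "(H has_vector_derivative h (a+b-x)) (at (a+b-x) within {a..b})"
      unfolding H_def using that by (intro integral_has_vector_derivative assms) auto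
    from has_vector_derivative_minus[OF refl_deriv[OF that this]] show ?thesis by simp
  qed
  from fundamental_theorem_of_calculus[OF assms(2) this]
  have "((\<lambda>s. h (a + b - s)) has_integral H b) {a..b}" by (simp add: H_def)
  then show ?thesis by (simp add: H_def integral_unique)
qed

lemma conv_sym:
  assumes "continuous_on {a..b} g" "continuous_on {a..b} h" "a \<le> b"
  shows "conv a b g h = conv a b h g"
proof -
  have "conv a b g h = integral {a..b} (\<lambda>s. (\<lambda>s. g s * h (a + b - s)) (a + b - s))"
    unfolding conv_def by (rule refl_integral[symmetric, OF _ assms(3)])
      (intro continuous_on_mult assms refl_cont)
  also have "\<dots> = conv a b h g" unfolding conv_def by (simp add: mult.commute)
  finally show ?thesis .
qed

lemma conv_cong:
  assumes "\<And>x. x \<in> {a..b} \<Longrightarrow> g x = g' x" "\<And>x. x \<in> {a..b} \<Longrightarrow> h x = h' x"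
  shows "conv a b g h = conv a b g' h'"
  unfolding conv_def by (rule integral_cong) (auto simp: assms)

lemma conv_lin:
  assumes "continuous_on {a..b} g1" "continuous_on {a..b} g2"
    "continuous_on {a..b} h1" "continuous_on {a..b} h2"
  shows "conv a b (\<lambda>x. g1 x + e * g2 x) (\<lambda>x. h1 x + e * h2 x) =
    conv a b g1 h1 + e * (conv a b g1 h2 + conv a b g2 h1) + e^2 * conv a b g2 h2"
proof -
  have eq: "(\<lambda>s. (g1 s + e * g2 s) * (h1 (a+b-s) + e * h2 (a+b-s))) =
     (\<lambda>s. (g1 s * h1 (a+b-s) + e * (g1 s * h2 (a+b-s)) + e * (g2 s * h1 (a+b-s)))
        + e^2 * (g2 s * h2 (a+b-s)))"
    by (auto simp: algebra_simps power2_eq_square)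
  show ?thesis unfolding conv_def eq
    using prod_int[OF assms(1,3)] prod_int[OF assms(1,4)] prod_int[OF assms(2,3)] prod_int[OF assms(2,4)]
    by (simp add: integral_add integrable_add integrable_on_mult_right distrib_left)
qed

lemma conv_lin1:
  assumes "continuous_on {a..b} g" "continuous_on {a..b} h1" "continuous_on {a..b} h2"
  shows "conv a b g (\<lambda>x. h1 x + e * h2 x) = conv a b g h1 + e * conv a b g h2"
proof -
  have eq: "(\<lambda>s. g s * (h1 (a+b-s) + e * h2 (a+b-s))) =
     (\<lambda>s. g s * h1 (a+b-s) + e * (g s * h2 (a+b-s)))"
    by (auto simp: algebra_simps)
  show ?thesis unfolding conv_def eq
    using prod_int[OF assms(1,2)] prod_int[OF assms(1,3)]
    by (simp add: integral_add integrable_add integrable_on_mult_right)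
qed

lemma variation:
  fixes t1 t2 m k v1 :: real and f u \<eta> :: "real \<Rightarrow> real"
  assumes t: "t1 < t2" and C2u: "C2 t1 t2 u" and C2e: "C2 t1 t2 \<eta>" and e1: "\<eta> t1 = 0"
    and cf: "continuous_on {t1..t2} f"
    and d: "((\<lambda>\<epsilon>. It t1 t2 m k f v1 (\<lambda>s. u s + \<epsilon> * \<eta> s)) has_real_derivative 0) (at 0)"
  shows "m * (dI t1 t2 u t1 - v1) * \<eta> t2 + integral {t1..t2} (\<lambda>s. \<eta> s *
     (m * dI t1 t2 (dI t1 t2 u) (t1+t2-s) + k * u (t1+t2-s) - f (t1+t2-s))) = 0"
proof -
  define Du where "Du = dI t1 t2 u"
  define DDu where "DDu = dI t1 t2 Du"
  define De where "De = dI t1 t2 \<eta>"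
  have cu: "continuous_on {t1..t2} u" "continuous_on {t1..t2} Du" "continuous_on {t1..t2} DDu"
    using C2_cont[OF C2u] by (auto simp: Du_def DDu_def)
  have ce: "continuous_on {t1..t2} \<eta>" "continuous_on {t1..t2} De"
    using C2_cont[OF C2e] by (auto simp: De_def)
  have du: "\<And>x. x \<in> {t1..t2} \<Longrightarrow> (u has_vector_derivative Du x) (at x within {t1..t2})"
    and ddu: "\<And>x. x \<in> {t1..t2} \<Longrightarrow> (Du has_vector_derivative DDu x) (at x within {t1..t2})"
    using C2u unfolding C2_def Du_def DDu_def by auto
  have de: "\<And>x. x \<in> {t1..t2} \<Longrightarrow> (\<eta> has_vector_derivative De x) (at x within {t1..t2})"
    using C2e unfolding C2_def De_def by auto
  have dsum: "dI t1 t2 (\<lambda>s. u s + \<epsilon> * \<eta> s) x = Du x + \<epsilon> * De x"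
    if "x \<in> {t1..t2}" for \<epsilon> x
    by (rule dI_eq[OF t that]) (intro derivative_intros du de that)
  define A where "A = It t1 t2 m k f v1 u"
  define B where "B = m/2*(conv t1 t2 Du De + conv t1 t2 De Du) + k/2*(conv t1 t2 u \<eta> + conv t1 t2 \<eta> u)
     - conv t1 t2 f \<eta> - m * v1 * \<eta> t2"
  define C where "C = m/2 * conv t1 t2 De De + k/2 * conv t1 t2 \<eta> \<eta>"
  have expand: "It t1 t2 m k f v1 (\<lambda>s. u s + \<epsilon> * \<eta> s) = A + \<epsilon> * B + \<epsilon>^2 * C" for \<epsilon>
  proof -
    have "conv t1 t2 (dI t1 t2 (\<lambda>s. u s + \<epsilon> * \<eta> s)) (dI t1 t2 (\<lambda>s. u s + \<epsilon> * \<eta> s))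
        = conv t1 t2 (\<lambda>x. Du x + \<epsilon> * De x) (\<lambda>x. Du x + \<epsilon> * De x)"
      by (rule conv_cong) (auto simp: dsum)
    also have "\<dots> = conv t1 t2 Du Du + \<epsilon> * (conv t1 t2 Du De + conv t1 t2 De Du) + \<epsilon>^2 * conv t1 t2 De De"
      by (rule conv_lin) (use cu ce in auto)
    finally have 1: "conv t1 t2 (dI t1 t2 (\<lambda>s. u s + \<epsilon> * \<eta> s)) (dI t1 t2 (\<lambda>s. u s + \<epsilon> * \<eta> s))
      = conv t1 t2 Du Du + \<epsilon> * (conv t1 t2 Du De + conv t1 t2 De Du) + \<epsilon>^2 * conv t1 t2 De De" .
    have 2: "conv t1 t2 (\<lambda>s. u s + \<epsilon> * \<eta> s) (\<lambda>s. u s + \<epsilon> * \<eta> s)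
      = conv t1 t2 u u + \<epsilon> * (conv t1 t2 u \<eta> + conv t1 t2 \<eta> u) + \<epsilon>^2 * conv t1 t2 \<eta> \<eta>"
      by (rule conv_lin) (use cu ce in auto)
    have 3: "conv t1 t2 f (\<lambda>s. u s + \<epsilon> * \<eta> s) = conv t1 t2 f u + \<epsilon> * conv t1 t2 f \<eta>"
      by (rule conv_lin1) (use cu ce cf in auto)
    show ?thesis unfolding It_def 1 2 3 A_def B_def C_def Du_def[symmetric]
      by (simp add: algebra_simps power2_eq_square)
  qed
  have "((\<lambda>\<epsilon>. A + \<epsilon> * B + \<epsilon>^2 * C) has_real_derivative B) (at 0)"
    by (auto intro!: derivative_eq_intros)
  moreover have "((\<lambda>\<epsilon>. A + \<epsilon> * B + \<epsilon>^2 * C) has_real_derivative 0) (at 0)"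
    using d unfolding expand .
  ultimately have B0: "B = 0" by (rule DERIV_unique)
  have t': "t1 \<le> t2" using t by simp
  have s1: "conv t1 t2 Du De = conv t1 t2 De Du" by (rule conv_sym) (use cu ce t' in auto)
  have s2: "conv t1 t2 u \<eta> = conv t1 t2 \<eta> u" by (rule conv_sym) (use cu ce t' in auto)
  have s3: "conv t1 t2 f \<eta> = conv t1 t2 \<eta> f" by (rule conv_sym) (use cf ce t' in auto)
  have Bf: "B = m * conv t1 t2 De Du + k * conv t1 t2 \<eta> u - conv t1 t2 \<eta> f - m * v1 * \<eta> t2"
    unfolding B_def s1 s2 s3 by (simp add: algebra_simps)
  (* integration by parts *)
  have F: "((\<lambda>s. Du (t1+t2-s) * \<eta> s) has_vector_derivative
      (Du (t1+t2-x) * De x + (- DDu (t1+t2-x)) * \<eta> x)) (at x within {t1..t2})"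
    if x: "x \<in> {t1..t2}" for x
  proof -
    have "t1+t2-x \<in> {t1..t2}" using x by auto
    from refl_deriv[OF x ddu[OF this]]
    show ?thesis by (intro has_vector_derivative_mult de x)
  qed
  from fundamental_theorem_of_calculus[OF t' F]
  have "((\<lambda>x. Du (t1+t2-x) * De x + (- DDu (t1+t2-x)) * \<eta> x) has_integral Du t1 * \<eta> t2) {t1..t2}"
    using e1 by simp
  then have ibp: "integral {t1..t2} (\<lambda>x. De x * Du (t1+t2-x) - \<eta> x * DDu (t1+t2-x)) = Du t1 * \<eta> t2"
    by (simp add: integral_unique algebra_simps)
  have i1: "(\<lambda>x. De x * Du (t1+t2-x)) integrable_on {t1..t2}" by (rule prod_int) (use cu ce in auto)
  have i2: "(\<lambda>x. \<eta> x * DDu (t1+t2-x)) integrable_on {t1..t2}" by (rule prod_int) (use cu ce in auto)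
  have i3: "(\<lambda>x. \<eta> x * u (t1+t2-x)) integrable_on {t1..t2}" by (rule prod_int) (use cu ce in auto)
  have i4: "(\<lambda>x. \<eta> x * f (t1+t2-x)) integrable_on {t1..t2}" by (rule prod_int) (use cf ce in auto)
  have cDe: "conv t1 t2 De Du = Du t1 * \<eta> t2 + conv t1 t2 \<eta> DDu"
    using ibp i1 i2 unfolding conv_def by (simp add: integral_diff)
  have eq: "(\<lambda>s. \<eta> s * (m * DDu (t1+t2-s) + k * u (t1+t2-s) - f (t1+t2-s))) =
     (\<lambda>s. m * (\<eta> s * DDu (t1+t2-s)) + k * (\<eta> s * u (t1+t2-s)) - \<eta> s * f (t1+t2-s))"
    by (auto simp: algebra_simps)
  have "integral {t1..t2} (\<lambda>s. \<eta> s * (m * DDu (t1+t2-s) + k * u (t1+t2-s) - f (t1+t2-s)))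
     = m * conv t1 t2 \<eta> DDu + k * conv t1 t2 \<eta> u - conv t1 t2 \<eta> f"
    unfolding eq conv_def using i2 i3 i4
    by (simp add: integral_add integral_diff integrable_add integrable_diff integrable_on_mult_right)
  then show ?thesis using B0 Bf cDe unfolding DDu_def[symmetric] Du_def[symmetric]
    by (simp add: algebra_simps)
qed

lemma C2I:
  fixes G G1 G2 :: "real \<Rightarrow> real"
  assumes t: "t1 < t2"
    and d1: "\<And>x. x \<in> {t1..t2} \<Longrightarrow> (G has_vector_derivative G1 x) (at x within {t1..t2})"
    and d2: "\<And>x. x \<in> {t1..t2} \<Longrightarrow> (G1 has_vector_derivative G2 x) (at x within {t1..t2})"
    and c: "continuous_on {t1..t2} G2"
  shows "C2 t1 t2 G" "\<And>x. x \<in> {t1..t2} \<Longrightarrow> dI t1 t2 G x = G1 x"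
    "\<And>x. x \<in> {t1..t2} \<Longrightarrow> dI t1 t2 (dI t1 t2 G) x = G2 x"
proof -
  show e1: "\<And>x. x \<in> {t1..t2} \<Longrightarrow> dI t1 t2 G x = G1 x" using dI_eq[OF t _ d1] .
  have h2: "(dI t1 t2 G has_vector_derivative G2 x) (at x within {t1..t2})" if "x \<in> {t1..t2}" for x
    by (rule has_vector_derivative_transform[OF that _ d2[OF that]]) (simp add: e1)
  show e2: "\<And>x. x \<in> {t1..t2} \<Longrightarrow> dI t1 t2 (dI t1 t2 G) x = G2 x" using dI_eq[OF t _ h2] .
  have "continuous_on {t1..t2} (dI t1 t2 (dI t1 t2 G))"
    using c by (rule continuous_on_eq) (simp add: e2)
  then show "C2 t1 t2 G" unfolding C2_def using d1 h2 e1 e2 by auto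
qed

theorem proposition2:
  fixes t1 t2 m k u1 v1 :: real and f u :: "real \<Rightarrow> real"
  assumes "0 \<le> t1" "t1 < t2" "m > 0" "k > 0"
    and "continuous_on {t1..t2} f"
    and "C2 t1 t2 u" "u t1 = u1"
    and stat: "\<And>\<eta>. C2 t1 t2 \<eta> \<Longrightarrow> \<eta> t1 = 0 \<Longrightarrow>
        ((\<lambda>\<epsilon>. It t1 t2 m k f v1 (\<lambda>s. u s + \<epsilon> * \<eta> s)) has_real_derivative 0) (at 0)"
  shows "(\<forall>s\<in>{t1<..<t2}. m * dI t1 t2 (dI t1 t2 u) s + k * u s = f s)
         \<and> u t1 = u1 \<and> dI t1 t2 u t1 = v1"
proof -
  note t = \<open>t1 < t2\<close>
  have t': "t1 \<le> t2" using t by simp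
  define h where "h s = m * dI t1 t2 (dI t1 t2 u) (t1+t2-s) + k * u (t1+t2-s) - f (t1+t2-s)" for s
  have var: "m * (dI t1 t2 u t1 - v1) * \<eta> t2 + integral {t1..t2} (\<lambda>s. \<eta> s * h s) = 0"
    if "C2 t1 t2 \<eta>" "\<eta> t1 = 0" for \<eta>
    unfolding h_def by (rule variation[OF t assms(6) that assms(5) stat[OF that]])
  have ch: "continuous_on {t1..t2} h"
  proof -
    have "continuous_on {t1..t2} (\<lambda>s. m * dI t1 t2 (dI t1 t2 u) s + k * u s - f s)"
      using C2_cont[OF assms(6)] assms(5) by (intro continuous_intros) auto
    from refl_cont[OF this] show ?thesis unfolding h_def .
  qed
  define G1 where "G1 x = integral {t1..x} h" for x
  define G0 where "G0 x = integral {t1..x} G1" for x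
  define c where "c = - G0 t2 / (t2 - t1)"
  define G where "G x = G0 x + c * (x - t1)" for x
  define dG where "dG x = G1 x + c" for x
  have dG1: "(G1 has_vector_derivative h x) (at x within {t1..t2})" if "x \<in> {t1..t2}" for x
    unfolding G1_def by (rule integral_has_vector_derivative[OF ch that])
  have cG1: "continuous_on {t1..t2} G1" using dG1 by (rule continuous_on_vector_derivative)
  have dG0: "(G0 has_vector_derivative G1 x) (at x within {t1..t2})" if "x \<in> {t1..t2}" for x
    unfolding G0_def by (rule integral_has_vector_derivative[OF cG1 that])
  have dGG: "(G has_vector_derivative dG x) (at x within {t1..t2})" if "x \<in> {t1..t2}" for x
    unfolding G_def[abs_def] dG_def using dG0[OF that] by (auto intro!: derivative_eq_intros)
  have ddG: "(dG has_vector_derivative h x) (at x within {t1..t2})" if "x \<in> {t1..t2}" for x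
    unfolding dG_def[abs_def] using dG1[OF that] by (auto intro!: derivative_eq_intros)
  have C2G: "C2 t1 t2 G" by (rule C2I(1)[OF t dGG ddG ch])
  have Gt1: "G t1 = 0" by (simp add: G_def G0_def)
  have Gt2: "G t2 = 0" using t by (simp add: G_def c_def)
  have I0: "integral {t1..t2} (\<lambda>s. G s * h s) = 0" using var[OF C2G Gt1] Gt2 by simp
  have cG: "continuous_on {t1..t2} G" using dGG by (rule continuous_on_vector_derivative)
  have cdG: "continuous_on {t1..t2} dG" using ddG by (rule continuous_on_vector_derivative)
  have "(\<lambda>s. G s * h s) integrable_on {t1..t2}"
    by (intro integrable_continuous_real continuous_on_mult cG ch)
  with I0 have hi1: "((\<lambda>s. G s * h s) has_integral 0) {t1..t2}"
    using integrable_integral by fastforce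
  have "((\<lambda>s. G s * h s + dG s * dG s) has_integral (G t2 * dG t2 - G t1 * dG t1)) {t1..t2}"
    by (rule fundamental_theorem_of_calculus[OF t'])
       (use has_vector_derivative_mult[OF dGG ddG] in \<open>auto simp: algebra_simps\<close>)
  then have "((\<lambda>s. G s * h s + dG s * dG s) has_integral 0) {t1..t2}" using Gt1 Gt2 by simp
  from has_integral_diff[OF this hi1]
  have hi2: "((\<lambda>s. dG s * dG s) has_integral 0) (cbox t1 t2)" by simp
  have dG0: "dG x = 0" if x: "x \<in> {t1..t2}" for x
  proof -
    have "dG x * dG x = 0"
      by (rule has_integral_0_cbox_imp_0[OF _ _ hi2]) (use x t in \<open>auto intro!: continuous_on_mult cdG\<close>)
    then show ?thesis by simp
  qed
  have h0: "h x = 0" if x: "x \<in> {t1..t2}" for x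
  proof -
    have "((\<lambda>_. 0::real) has_vector_derivative h x) (at x within {t1..t2})"
      by (rule has_vector_derivative_transform[OF x _ ddG[OF x]]) (simp add: dG0)
    from dI_eq[OF t x this] dI_eq[OF t x has_vector_derivative_const] show ?thesis by simp
  qed
  have ode: "\<forall>s\<in>{t1<..<t2}. m * dI t1 t2 (dI t1 t2 u) s + k * u s = f s"
  proof
    fix s assume s: "s \<in> {t1<..<t2}"
    then have "t1 + t2 - s \<in> {t1..t2}" by auto
    from h0[OF this] show "m * dI t1 t2 (dI t1 t2 u) s + k * u s = f s" by (simp add: h_def)
  qed
  define L where "L x = x - t1" for x
  have C2L: "C2 t1 t2 L"
    by (rule C2I(1)[where ?G1.0 = "\<lambda>_. 1" and ?G2.0 = "\<lambda>_. 0", OF t])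
       (auto simp: L_def[abs_def] intro!: derivative_eq_intros continuous_intros)
  have "integral {t1..t2} (\<lambda>s. L s * h s) = 0"
    by (subst integral_cong[where g = "\<lambda>_. 0"]) (auto simp: h0)
  with var[OF C2L] have "m * (dI t1 t2 u t1 - v1) * (t2 - t1) = 0" by (simp add: L_def)
  then have "dI t1 t2 u t1 = v1" using t \<open>m > 0\<close> by simp
  with ode assms(7) show ?thesis by simp
qed

end
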